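(* Let $b,k>0$, $0<c<1$, $R_0>0$, $\bar\varrho>0$ be constants. Let $\mathring\varrho,\mathring n,\mathring\Pi$ be functions on $\mathbb{R}^3$ with $\mathring\varrho+p(\mathring\varrho,\mathring n)+\mathring\Pi>0$, and let $\mathbf u_1$ be a smooth vector field supported in $B_{R_0}$ with $$\int_{B_{R_0}}\mathbf x\cdot\mathbf u_1|\mathbf u_1|(\mathring\varrho+\mathring p+\mathring\Pi)\,dx>R_0\frac{(c+1)^2}{2(c^2+1)}\int_{B_{R_0}}|\mathbf u_1|^2(\mathring\varrho+\mathring p+\mathring\Pi)\,dx,$$ where $\mathring p=p(\mathring\varrho,\mathring n)$. For $\sigma>0$ set $\mathring{\mathbf u}=\sigma\mathbf u_1$, $E=\int_{B_{R_0}}\big((\mathring\varrho+\mathring p+\mathring\Pi)|\mathring{\mathbf u}|^2+\mathring\varrho-\bar\varrho\big)dx$ and $Q(0)=\int_{B_{R_0}}\mathbf x\cdot\mathring{\mathbf u}\sqrt{1+|\mathring{\mathbf u}|^2}(\mathring\varrho+\mathring p+\mathring\Pi)\,dx$. Then there exists $\bar R>R_0$ such that for all sufficiently large $\sigma>0$, with $A=c\big(1+\frac{3b\bar R^3}{E+b\bar R^3}\big)$, $B=\frac{k\bar R^3}{E+b\bar R^3}$ and $z_0=\frac{A(1-B)+\sqrt{A^2+2B-B^2}}{A^2+1}$, the following hold: $A^2+2B-B^2>0$, $A+B<1$, $z_0<1$, $\int_{\frac12+\frac{z_0}2}^1\frac{dz}{1-\sqrt{1-z^2}-Az-B}<\log(\bar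 R/R_0)$, and $\frac{Q(0)}{R_0(E+bR_0^3)}>\frac{z_0}2+\frac12$.
   Context: $B_R=\{x\in\mathbb{R}^3:|x|<R\}$; $p=p(\varrho,n)$ is a given pressure function (equation of state). *)

theory Defs
  imports "HOL-Analysis.Analysis"
begin

fun Ck_field :: "nat \<Rightarrow> (real^3 \<Rightarrow> real^3) \<Rightarrow> bool" where
  "Ck_field 0 f = continuous_on UNIV f"
| "Ck_field (Suc m) f =
     (\<exists>D. (\<forall>x. (f has_derivative D x) (at x)) \<and> (\<forall>v. Ck_field m (\<lambda>x. D x v)))"

definition smooth_field :: "(real^3 \<Rightarrow> real^3) \<Rightarrow> bool" where
  "smooth_field f \<longleftrightarrow> (\<forall>m. Ck_field m f)"

end

theory Submission
  imports Defs
begin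


lemma quad_id:
  fixes A B d z z0 :: real
  assumes h1: "(A^2+1)*z0 = A*(1-B)+d" and d2: "d^2 = A^2+2*B-B^2"
  shows "(A^2+1)*((1-A*z-B)^2 - (1-z^2)) = (A^2+1)*((A^2+1)*(z-z0)^2 + 2*d*(z-z0))"
proof -
  define q where "q = A^2+1"
  have e1: "q*(q*(z-z0)^2 + 2*d*(z-z0)) = q^2*z^2 - 2*q*z*(q*z0) + (q*z0)^2 + 2*d*q*z - 2*d*(q*z0)"
    by (simp add: power2_eq_square algebra_simps)
  also have "\<dots> = q^2*z^2 - 2*q*z*(A*(1-B)+d) + (A*(1-B)+d)^2 + 2*d*q*z - 2*d*(A*(1-B)+d)"
    using h1 unfolding q_def by simp
  also have "\<dots> = q^2*z^2 - 2*q*A*(1-B)*z + A^2*(1-B)^2 - d^2"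
    by (simp add: power2_eq_square algebra_simps)
  also have "\<dots> = q^2*z^2 - 2*q*A*(1-B)*z + A^2*(1-B)^2 - (A^2+2*B-B^2)"
    using d2 by simp
  also have "\<dots> = q*((1-A*z-B)^2 - (1-z^2))"
    unfolding q_def by (simp add: power2_eq_square algebra_simps)
  finally show ?thesis unfolding q_def by (rule sym)
qed

lemma cont_times_integrable:
  fixes g w :: "real^3 \<Rightarrow> real"
  assumes g: "continuous_on UNIV g" and w: "w integrable_on ball 0 R" and wpos: "\<And>x. w x \<ge> 0"
  shows "(\<lambda>x. g x * w x) absolutely_integrable_on ball 0 R"
proof -
  have wa: "w absolutely_integrable_on ball 0 R"
    by (rule nonnegative_absolutely_integrable_1[OF w]) (use wpos in auto)
  have m: "g \<in> borel_measurable (lebesgue_on (ball 0 R))"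
    by (rule continuous_imp_measurable_on_sets_lebesgue) (use g continuous_on_subset in auto)
  have "compact (g ` cball 0 R)"
    by (rule compact_continuous_image) (use g continuous_on_subset in auto)
  then have "bounded (g ` cball 0 R)" by (rule compact_imp_bounded)
  then have b: "bounded (g ` ball 0 R)"
    by (rule bounded_subset) auto
  show ?thesis
    using absolutely_integrable_bounded_measurable_product[OF bilinear_times m _ b wa] by auto
qed

lemma int_bound:
  fixes A B z0 :: real
  assumes A: "0 \<le> A" and B: "0 \<le> B" and AB: "A + B < 1" and D: "A^2+2*B-B^2 > 0"
    and z0: "z0 = (A*(1-B) + sqrt(A^2+2*B-B^2))/(A^2+1)" and z1: "z0 < 1"
  shows "integral {1/2+z0/2..1} (\<lambda>z. 1/(1 - sqrt(1-z^2) - A*z - B)) \<le> 4/(1-z0)"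
proof -
  define d where "d = sqrt(A^2+2*B-B^2)"
  have d0: "d \<ge> 0" unfolding d_def using D by (intro real_sqrt_ge_zero) linarith
  have d2: "d^2 = A^2+2*B-B^2" unfolding d_def using D by (subst real_sqrt_pow2) linarith+
  have ne: "A^2+1 \<noteq> 0" by (metis add_nonneg_pos zero_le_power2 zero_less_one less_irrefl)
  have h1: "(A^2+1)*z0 = A*(1-B)+d" unfolding z0 d_def using ne by simp
  have pos: "A^2+1 > 0" by (metis add_nonneg_pos zero_le_power2 zero_less_one)
  have z00: "z0 \<ge> 0" unfolding z0 d_def[symmetric] using A AB d0 pos by (intro divide_nonneg_pos) auto
  define m where "m = 1/2+z0/2"
  define K where "K = (1-z0)^2/8"
  have Kp: "K > 0" unfolding K_def using z1 by simp
  have fb: "1 - sqrt(1-z^2) - A*z - B \<ge> K" if z: "z \<in> {m..1}" for z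
  proof -
    define a where "a = 1 - A*z - B"
    define s where "s = sqrt(1-z^2)"
    have zz: "z \<ge> 1/2" "z \<le> 1" using z z00 unfolding m_def by auto
    have "A*z \<le> A" using A zz by (simp add: mult_left_le)
    then have a0: "a > 0" unfolding a_def using AB by simp
    have "A*z \<ge> 0" using A zz by simp
    then have a1: "a \<le> 1" unfolding a_def using B by linarith
    have zsq: "z^2 \<le> 1" using zz by (simp add: abs_square_le_1)
    have s0: "s \<ge> 0" "s \<le> 1" unfolding s_def using zz zsq by auto
    have s2: "s^2 = 1 - z^2" unfolding s_def using zsq by simp
    have P: "a^2 - s^2 = (A^2+1)*(z-z0)^2 + 2*d*(z-z0)"
    proof -
      have "(A^2+1)*(a^2 - s^2) = (A^2+1)*((A^2+1)*(z-z0)^2 + 2*d*(z-z0))"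
        unfolding a_def s2 by (rule quad_id[OF h1 d2])
      then show ?thesis using ne by simp
    qed
    have zz0: "z - z0 \<ge> (1-z0)/2" using z unfolding m_def by auto
    have "(z-z0)^2 \<ge> ((1-z0)/2)^2" using zz0 z1 by (intro power_mono) auto
    moreover have "(A^2+1)*(z-z0)^2 \<ge> (z-z0)^2" by (simp add: mult_le_cancel_right1)
    moreover have "2*d*(z-z0) \<ge> 0" using d0 zz0 z1 by simp
    ultimately have num: "a^2 - s^2 \<ge> ((1-z0)/2)^2" using P by linarith
    have "s^2 \<le> a^2" using num zero_le_power2[of "(1-z0)/2"] by linarith
    then have sa: "s \<le> a" by (rule power2_le_imp_le) (use a0 in auto)
    have eq: "a - s = (a^2 - s^2)/(a+s)" using a0 s0 by (simp add: field_simps power2_eq_square)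
    have "((1-z0)/2)^2 / 2 \<le> (a^2 - s^2)/(a+s)"
    proof (rule frac_le)
      show "0 \<le> a^2 - s^2" using num zero_le_power2[of "(1-z0)/2"] by linarith
      show "((1-z0)/2)^2 \<le> a^2 - s^2" by (rule num)
      show "0 < a + s" using a0 s0 by linarith
      show "a + s \<le> 2" using a1 s0 by linarith
    qed
    moreover have "((1-z0)/2)^2 / 2 = K" unfolding K_def by (simp add: power_divide)
    ultimately have "a - s \<ge> K" using eq by simp
    then show ?thesis unfolding a_def s_def by linarith
  qed
  have cont: "continuous_on {m..1} (\<lambda>z. 1/(1 - sqrt(1-z^2) - A*z - B))"
  proof (intro continuous_intros ballI)
    fix z assume "z \<in> {m..1}"
    then show "1 - sqrt(1-z^2) - A*z - B \<noteq> 0" using fb[of z] Kp by linarith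
  qed
  have "integral {m..1} (\<lambda>z. 1/(1 - sqrt(1-z^2) - A*z - B)) \<le> integral {m..1} (\<lambda>z. 1/K)"
  proof (rule integral_le)
    show "(\<lambda>z. 1/(1 - sqrt(1-z^2) - A*z - B)) integrable_on {m..1}"
      by (rule integrable_continuous_real[OF cont])
    show "(\<lambda>z. 1/K) integrable_on {m..1}" by (intro integrable_continuous_real continuous_intros)
    fix z assume z: "z \<in> {m..1}"
    show "1/(1 - sqrt(1-z^2) - A*z - B) \<le> 1/K"
      using fb[OF z] Kp by (intro divide_left_mono) auto
  qed
  also have "\<dots> = (1-m)/K" using z1 unfolding m_def by simp
  also have "\<dots> = 4/(1-z0)"
  proof -
    define t where "t = 1 - z0"
    have t0: "t > 0" unfolding t_def using z1 by simp
    have e1: "1 - m = t/2" unfolding m_def t_def by simp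
    have e2: "K = t^2/8" unfolding K_def t_def ..
    have "(1-m)/K = (t/2)/(t^2/8)" by (simp only: e1 e2)
    also have "\<dots> = 4/t" using t0 by (simp add: power2_eq_square field_simps)
    finally show ?thesis unfolding t_def .
  qed
  finally show ?thesis unfolding m_def .
qed

lemma pw:
  fixes s t n w :: real
  assumes sg: "s \<ge> 0" and n0: "n \<ge> 0" and w0: "w \<ge> 0"
  shows "s^2 * (t * n * w) - s * (\<bar>t\<bar> * w) \<le> (s * t) * sqrt (1 + (s * n)^2) * w"
proof -
  define S where "S = sqrt (1 + (s * n)^2)"
  have S1: "s * n \<le> S" unfolding S_def by (rule real_le_rsqrt) simp
  have sn: "s * n \<ge> 0" using sg n0 by simp
  have "1 + (s * n)^2 \<le> (s * n + 1)^2" using sn by (simp add: power2_sum)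
  then have S2: "S \<le> s * n + 1" unfolding S_def using sn by (intro real_le_lsqrt) auto
  have "\<bar>t * (S - s * n)\<bar> = \<bar>t\<bar> * (S - s * n)" using S1 by (simp add: abs_mult)
  also have "\<dots> \<le> \<bar>t\<bar> * 1" using S1 S2 by (intro mult_left_mono) auto
  finally have "- \<bar>t\<bar> \<le> t * (S - s * n)" by linarith
  then have "s * (- \<bar>t\<bar>) \<le> s * (t * (S - s * n))" using sg by (rule mult_left_mono)
  then have "s * (- \<bar>t\<bar>) * w \<le> s * (t * (S - s * n)) * w" using w0 by (rule mult_right_mono)
  moreover have "s * (- \<bar>t\<bar>) * w = s^2 * (t * n * w) - s * (\<bar>t\<bar> * w) - s^2 * (t * n * w)"
    by (simp add: power2_eq_square)
  moreover have "s * (t * (S - s * n)) * w = (s * t) * S * w - s^2 * (t * n * w)"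
    by (simp add: power2_eq_square right_diff_distrib left_diff_distrib mult.commute mult.left_commute)
  ultimately show ?thesis unfolding S_def by linarith
qed

lemma lim_part:
  fixes I2 I3 J Cc b k c R0 Rb zs th :: real
  assumes I2pos: "I2 > 0" and R0: "R0 > 0" and b: "b > 0" and k: "k > 0" and c0: "0 < c" and c1: "c < 1"
    and zs: "2*c/(c^2+1) < zs" and th1: "(c+1)^2/(2*(c^2+1)) < th" and th2: "th < I3/(R0*I2)"
  shows "\<forall>\<^sub>F sigma in at_top. sigma > 0 \<and> sigma^2 * I2 + Cc + b * Rb^3 > 0 \<and> sigma^2 * I2 + Cc + b * R0^3 > 0 \<and>
      (c * (1 + 3 * b * Rb^3 / (sigma^2 * I2 + Cc + b * Rb^3)))^2 + 2 * (k * Rb^3 / (sigma^2 * I2 + Cc + b * Rb^3))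
         - (k * Rb^3 / (sigma^2 * I2 + Cc + b * Rb^3))^2 > 0 \<and>
      c * (1 + 3 * b * Rb^3 / (sigma^2 * I2 + Cc + b * Rb^3)) + k * Rb^3 / (sigma^2 * I2 + Cc + b * Rb^3) < 1 \<and>
      (let A = c * (1 + 3 * b * Rb^3 / (sigma^2 * I2 + Cc + b * Rb^3));
           B = k * Rb^3 / (sigma^2 * I2 + Cc + b * Rb^3);
           z0 = (A * (1 - B) + sqrt (A^2 + 2 * B - B^2)) / (A^2 + 1)
       in z0 < zs \<and> z0 / 2 + 1/2 < th) \<and>
      (sigma^2 * I3 - sigma * J) / (R0 * (sigma^2 * I2 + Cc + b * R0^3)) > th"
proof -
  define Es where "Es = (\<lambda>sigma::real. sigma^2 * I2 + Cc)"
  have Es_top: "filterlim (\<lambda>sigma. Es sigma + Y) at_top at_top" for Y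
  proof -
    have "filterlim (\<lambda>sigma::real. sigma^2) at_top at_top"
      by (intro filterlim_pow_at_top filterlim_ident) auto
    then have "filterlim (\<lambda>sigma::real. I2 * sigma^2) at_top at_top"
      by (rule filterlim_tendsto_pos_mult_at_top[OF tendsto_const I2pos])
    then have "filterlim (\<lambda>sigma::real. (Cc + Y) + I2 * sigma^2) at_top at_top"
      by (rule filterlim_tendsto_add_at_top[OF tendsto_const])
    moreover have "(\<lambda>sigma::real. (Cc + Y) + I2 * sigma^2) = (\<lambda>sigma. Es sigma + Y)"
      unfolding Es_def by (rule ext) (simp add: mult.commute)
    ultimately show ?thesis by simp
  qed
  have iv: "((\<lambda>sigma. X / (Es sigma + Y)) \<longlongrightarrow> 0) at_top" for X Y
    by (rule tendsto_divide_0[OF tendsto_const filterlim_at_top_imp_at_infinity[OF Es_top]])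
  define Af where "Af = (\<lambda>sigma. c * (1 + 3 * b * Rb^3 / (Es sigma + b * Rb^3)))"
  define Bf where "Bf = (\<lambda>sigma. k * Rb^3 / (Es sigma + b * Rb^3))"
  define Zf where "Zf = (\<lambda>sigma. (Af sigma * (1 - Bf sigma) + sqrt (Af sigma ^2 + 2 * Bf sigma - Bf sigma ^2)) / (Af sigma ^2 + 1))"
  have Alim0: "((\<lambda>sigma. c * (1 + 3 * b * Rb^3 / (Es sigma + b * Rb^3))) \<longlongrightarrow> c * (1 + 0)) at_top"
    by (rule tendsto_mult[OF tendsto_const tendsto_add[OF tendsto_const iv]])
  have Alim: "(Af \<longlongrightarrow> c) at_top" using Alim0 unfolding Af_def by simp
  have Blim: "(Bf \<longlongrightarrow> 0) at_top" unfolding Bf_def by (rule iv)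
  have Dlim: "((\<lambda>sigma. Af sigma ^2 + 2 * Bf sigma - Bf sigma ^2) \<longlongrightarrow> c^2 + 2 * 0 - 0^2) at_top"
    by (rule tendsto_diff[OF tendsto_add[OF tendsto_power[OF Alim] tendsto_mult[OF tendsto_const Blim]] tendsto_power[OF Blim]])
  have cpos: "c^2 + 1 > 0" by (metis add_nonneg_pos zero_le_power2 zero_less_one)
  have Zlim0: "(Zf \<longlongrightarrow> (c * (1 - 0) + sqrt (c^2 + 2 * 0 - 0^2)) / (c^2 + 1)) at_top"
    unfolding Zf_def
    by (rule tendsto_divide[OF tendsto_add[OF tendsto_mult[OF Alim tendsto_diff[OF tendsto_const Blim]] tendsto_real_sqrt[OF Dlim]]
         tendsto_add[OF tendsto_power[OF Alim] tendsto_const]]) (use cpos in simp)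
  have Zlim: "(Zf \<longlongrightarrow> 2*c/(c^2+1)) at_top" using Zlim0 c0 by simp
  have zlal: "(2*c/(c^2+1)) / 2 + 1/2 = (c+1)^2/(2*(c^2+1))" using cpos
    by (simp add: field_simps power2_eq_square)
  have Z2lim: "((\<lambda>sigma. Zf sigma / 2 + 1/2) \<longlongrightarrow> (c+1)^2/(2*(c^2+1))) at_top"
    using tendsto_add[OF tendsto_divide[OF Zlim tendsto_const, of 2] tendsto_const[of "1/2"]] zlal by simp
  have inv0: "((\<lambda>sigma::real. 1 / sigma) \<longlongrightarrow> 0) at_top"
    by (rule tendsto_divide_0[OF tendsto_const filterlim_at_top_imp_at_infinity[OF filterlim_ident]])
  define C1 where "C1 = Cc + b * R0^3"
  have L0: "((\<lambda>sigma. (I3 - J * (1/sigma)) / (R0 * (I2 + C1 * (1/sigma)^2)))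
        \<longlongrightarrow> (I3 - J * 0) / (R0 * (I2 + C1 * 0^2))) at_top"
    by (rule tendsto_divide[OF tendsto_diff[OF tendsto_const tendsto_mult[OF tendsto_const inv0]]
          tendsto_mult[OF tendsto_const tendsto_add[OF tendsto_const tendsto_mult[OF tendsto_const tendsto_power[OF inv0]]]]])
       (use I2pos R0 in simp)
  have L1: "\<forall>\<^sub>F sigma in at_top. (I3 - J * (1/sigma)) / (R0 * (I2 + C1 * (1/sigma)^2))
      = (sigma^2 * I3 - sigma * J) / (R0 * (Es sigma + b * R0^3))"
    using eventually_gt_at_top[of 0]
  proof (rule eventually_mono)
    fix sigma :: real assume sg: "sigma > 0"
    have n: "sigma^2 * (I3 - J * (1/sigma)) = sigma^2 * I3 - sigma * J"
      using sg by (simp add: power2_eq_square right_diff_distrib)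
    have d: "sigma^2 * (R0 * (I2 + C1 * (1/sigma)^2)) = R0 * (Es sigma + b * R0^3)"
      using sg unfolding Es_def C1_def by (simp add: field_simps power2_eq_square)
    have "(I3 - J * (1/sigma)) / (R0 * (I2 + C1 * (1/sigma)^2))
        = (sigma^2 * (I3 - J * (1/sigma))) / (sigma^2 * (R0 * (I2 + C1 * (1/sigma)^2)))"
      using sg by (simp only: mult_divide_mult_cancel_left_if) simp
    then show "(I3 - J * (1/sigma)) / (R0 * (I2 + C1 * (1/sigma)^2))
      = (sigma^2 * I3 - sigma * J) / (R0 * (Es sigma + b * R0^3))" using n d by simp
  qed
  have Llim: "((\<lambda>sigma. (sigma^2 * I3 - sigma * J) / (R0 * (Es sigma + b * R0^3))) \<longlongrightarrow> I3 / (R0 * I2)) at_top"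
    using Lim_transform_eventually[OF L0 L1] by simp
  have e1: "\<forall>\<^sub>F sigma in at_top. sigma > (0::real)" by (rule eventually_gt_at_top)
  have e2: "\<forall>\<^sub>F sigma in at_top. Es sigma + b * Rb^3 > 0"
    using Es_top[of "b * Rb^3"] unfolding filterlim_at_top_dense by blast
  have e3: "\<forall>\<^sub>F sigma in at_top. Es sigma + b * R0^3 > 0"
    using Es_top[of "b * R0^3"] unfolding filterlim_at_top_dense by blast
  have e4: "\<forall>\<^sub>F sigma in at_top. Af sigma ^2 + 2 * Bf sigma - Bf sigma ^2 > 0"
    using order_tendstoD(1)[OF Dlim, of 0] c0 by simp
  have e5: "\<forall>\<^sub>F sigma in at_top. Af sigma + Bf sigma < 1"
    using order_tendstoD(2)[OF tendsto_add[OF Alim Blim], of 1] c1 by simp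
  have e6: "\<forall>\<^sub>F sigma in at_top. Zf sigma < zs" using order_tendstoD(2)[OF Zlim zs] .
  have e7: "\<forall>\<^sub>F sigma in at_top. Zf sigma / 2 + 1/2 < th" using order_tendstoD(2)[OF Z2lim th1] .
  have e8: "\<forall>\<^sub>F sigma in at_top. (sigma^2 * I3 - sigma * J) / (R0 * (Es sigma + b * R0^3)) > th"
    using order_tendstoD(1)[OF Llim th2] .
  have "\<forall>\<^sub>F sigma in at_top. sigma > 0 \<and> Es sigma + b * Rb^3 > 0 \<and> Es sigma + b * R0^3 > 0 \<and>
      Af sigma ^2 + 2 * Bf sigma - Bf sigma ^2 > 0 \<and> Af sigma + Bf sigma < 1 \<and>
      (Zf sigma < zs \<and> Zf sigma / 2 + 1/2 < th) \<and>
      (sigma^2 * I3 - sigma * J) / (R0 * (Es sigma + b * R0^3)) > th"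
    using e1 e2 e3 e4 e5 e6 e7 e8 by (intro eventually_conj) 
  then show ?thesis unfolding Zf_def Af_def Bf_def Es_def Let_def by simp
qed

theorem mainTheorem11:
  fixes p :: "real \<Rightarrow> real \<Rightarrow> real"
    and rho0 n0 Pi0 :: "real^3 \<Rightarrow> real"
    and u1 :: "real^3 \<Rightarrow> real^3"
    and b k c R0 rhobar :: real
  assumes "b > 0" and "k > 0" and "0 < c" and "c < 1" and "R0 > 0" and "rhobar > 0"
    and pos: "\<forall>x. rho0 x + p (rho0 x) (n0 x) + Pi0 x > 0"
    and int_w: "(\<lambda>x. rho0 x + p (rho0 x) (n0 x) + Pi0 x) integrable_on ball 0 R0"
    and int_rho: "rho0 integrable_on ball 0 R0"
    and smooth: "smooth_field u1"
    and supp: "closure {x. u1 x \<noteq> 0} \<subseteq> ball 0 R0"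
    and ineq: "integral (ball 0 R0)
                 (\<lambda>x. inner x (u1 x) * norm (u1 x) * (rho0 x + p (rho0 x) (n0 x) + Pi0 x))
               > R0 * (c + 1)^2 / (2 * (c^2 + 1)) *
                 integral (ball 0 R0)
                 (\<lambda>x. (norm (u1 x))^2 * (rho0 x + p (rho0 x) (n0 x) + Pi0 x))"
  shows "\<exists>Rbar > R0. \<forall>\<^sub>F sigma in at_top. sigma > 0 \<and>
    (let E = integral (ball 0 R0)
               (\<lambda>x. (rho0 x + p (rho0 x) (n0 x) + Pi0 x) * (norm (sigma *\<^sub>R u1 x))^2
                    + rho0 x - rhobar);
         Q0 = integral (ball 0 R0)
               (\<lambda>x. inner x (sigma *\<^sub>R u1 x) * sqrt (1 + (norm (sigma *\<^sub>R u1 x))^2)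
                    * (rho0 x + p (rho0 x) (n0 x) + Pi0 x));
         A = c * (1 + 3 * b * Rbar^3 / (E + b * Rbar^3));
         B = k * Rbar^3 / (E + b * Rbar^3);
         z0 = (A * (1 - B) + sqrt (A^2 + 2 * B - B^2)) / (A^2 + 1)
     in A^2 + 2 * B - B^2 > 0 \<and> A + B < 1 \<and> z0 < 1 \<and>
        integral {1/2 + z0/2 .. 1} (\<lambda>z. 1 / (1 - sqrt (1 - z^2) - A * z - B)) < ln (Rbar / R0) \<and>
        Q0 / (R0 * (E + b * R0^3)) > z0 / 2 + 1/2)"
proof -
  define w where "w = (\<lambda>x. rho0 x + p (rho0 x) (n0 x) + Pi0 x)"
  have wpos: "\<And>x. w x \<ge> 0" using pos by (simp add: w_def less_imp_le)
  have wint: "w integrable_on ball 0 R0" using int_w unfolding w_def .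
  have ucont: "continuous_on UNIV u1" using smooth unfolding smooth_field_def
    by (metis Ck_field.simps(1))
  have intg: "(\<lambda>x. g x * w x) integrable_on ball 0 R0" if "continuous_on UNIV g" for g
    using cont_times_integrable[OF that wint wpos] absolutely_integrable_on_def by blast
  define I2 where "I2 = integral (ball 0 R0) (\<lambda>x. (norm (u1 x))^2 * w x)"
  define I3 where "I3 = integral (ball 0 R0) (\<lambda>x. inner x (u1 x) * norm (u1 x) * w x)"
  define J where "J = integral (ball 0 R0) (\<lambda>x. \<bar>inner x (u1 x)\<bar> * w x)"
  define C0 where "C0 = integral (ball 0 R0) (\<lambda>x. rho0 x - rhobar)"
  define al where "al = (c+1)^2/(2*(c^2+1))"
  have i2: "(\<lambda>x. (norm (u1 x))^2 * w x) integrable_on ball 0 R0"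
    by (rule intg) (intro continuous_intros ucont)
  have i3: "(\<lambda>x. inner x (u1 x) * norm (u1 x) * w x) integrable_on ball 0 R0"
    by (rule intg) (intro continuous_intros ucont)
  have iJ: "(\<lambda>x. \<bar>inner x (u1 x)\<bar> * w x) integrable_on ball 0 R0"
    by (rule intg) (intro continuous_intros ucont)
  have irho: "(\<lambda>x. rho0 x - rhobar) integrable_on ball 0 R0"
    by (intro integrable_diff int_rho integrable_on_const lmeasurable_ball)
  have ineq': "I3 > R0 * al * I2"
    using ineq unfolding I3_def I2_def al_def w_def by simp
  have I3le: "I3 \<le> R0 * I2"
  proof -
    have "I3 \<le> integral (ball 0 R0) (\<lambda>x. R0 * ((norm (u1 x))^2 * w x))"
      unfolding I3_def
    proof (rule integral_le[OF i3 integrable_on_mult_right[OF i2]])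
      fix x :: "real^3" assume x: "x \<in> ball 0 R0"
      have "inner x (u1 x) \<le> norm x * norm (u1 x)" by (rule norm_cauchy_schwarz)
      also have "\<dots> \<le> R0 * norm (u1 x)" using x by (intro mult_right_mono) auto
      finally have "inner x (u1 x) * (norm (u1 x) * w x) \<le> R0 * norm (u1 x) * (norm (u1 x) * w x)"
        using wpos by (intro mult_right_mono) auto
      then show "inner x (u1 x) * norm (u1 x) * w x \<le> R0 * ((norm (u1 x))^2 * w x)"
        by (simp add: power2_eq_square mult.assoc)
    qed
    then show ?thesis unfolding I2_def by simp
  qed
  have cpos: "c^2 + 1 > 0" by (metis add_nonneg_pos zero_le_power2 zero_less_one)
  have cm: "(c-1)^2 > 0" using \<open>c < 1\<close> by simp
  have al1: "al < 1"
  proof -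
    have "(c+1)^2 = 2*(c^2+1) - (c-1)^2" by (simp add: power2_eq_square algebra_simps)
    then have "(c+1)^2 < 2*(c^2+1)" using cm by linarith
    moreover have "2*(c^2+1) > 0" using cpos by simp
    ultimately show ?thesis unfolding al_def by (simp add: pos_divide_less_eq)
  qed
  have I2pos: "I2 > 0"
  proof (rule ccontr)
    assume "\<not> I2 > 0"
    then have "R0 * I2 \<le> 0" using \<open>R0 > 0\<close> by (simp add: mult_nonneg_nonpos)
    then have "(- (R0 * I2)) * (1 - al) \<ge> 0" using al1 by (intro mult_nonneg_nonneg) linarith+
    then have "R0 * I2 \<le> R0 * al * I2" by (simp add: algebra_simps)
    then show False using ineq' I3le by linarith
  qed
  have Eeq: "integral (ball 0 R0)
               (\<lambda>x. (rho0 x + p (rho0 x) (n0 x) + Pi0 x) * (norm (sigma *\<^sub>R u1 x))^2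
                    + rho0 x - rhobar) = sigma^2 * I2 + C0" for sigma
  proof -
    have nn: "(norm (sigma *\<^sub>R u1 x))^2 = sigma^2 * (norm (u1 x))^2" for x
      by (simp add: power_mult_distrib)
    have "(\<lambda>x. (rho0 x + p (rho0 x) (n0 x) + Pi0 x) * (norm (sigma *\<^sub>R u1 x))^2
                    + rho0 x - rhobar) = (\<lambda>x. sigma^2 * ((norm (u1 x))^2 * w x) + (rho0 x - rhobar))"
    proof
      fix x
      show "(rho0 x + p (rho0 x) (n0 x) + Pi0 x) * (norm (sigma *\<^sub>R u1 x))^2
                    + rho0 x - rhobar = sigma^2 * ((norm (u1 x))^2 * w x) + (rho0 x - rhobar)"
        unfolding nn w_def by (simp add: mult_ac)
    qed
    then show ?thesis
      using integral_add[OF integrable_on_mult_right[OF i2] irho]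
      unfolding I2_def C0_def by simp
  qed
  have Qge: "integral (ball 0 R0)
               (\<lambda>x. inner x (sigma *\<^sub>R u1 x) * sqrt (1 + (norm (sigma *\<^sub>R u1 x))^2)
                    * (rho0 x + p (rho0 x) (n0 x) + Pi0 x)) \<ge> sigma^2 * I3 - sigma * J"
    if sg: "sigma \<ge> 0" for sigma
  proof -
    have iq: "(\<lambda>x. inner x (sigma *\<^sub>R u1 x) * sqrt (1 + (norm (sigma *\<^sub>R u1 x))^2) * w x) integrable_on ball 0 R0"
      by (rule intg) (intro continuous_intros ucont)
    have "integral (ball 0 R0) (\<lambda>x. sigma^2 * (inner x (u1 x) * norm (u1 x) * w x) - sigma * (\<bar>inner x (u1 x)\<bar> * w x))
       \<le> integral (ball 0 R0) (\<lambda>x. inner x (sigma *\<^sub>R u1 x) * sqrt (1 + (norm (sigma *\<^sub>R u1 x))^2) * w x)"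
    proof (rule integral_le[OF integrable_diff[OF integrable_on_mult_right[OF i3] integrable_on_mult_right[OF iJ]] iq])
      fix x :: "real^3" assume x: "x \<in> ball 0 R0"
      have e1: "inner x (sigma *\<^sub>R u1 x) = sigma * inner x (u1 x)" by simp
      have e2: "norm (sigma *\<^sub>R u1 x) = sigma * norm (u1 x)" using sg by simp
      show "sigma^2 * (inner x (u1 x) * norm (u1 x) * w x) - sigma * (\<bar>inner x (u1 x)\<bar> * w x)
          \<le> inner x (sigma *\<^sub>R u1 x) * sqrt (1 + (norm (sigma *\<^sub>R u1 x))^2) * w x"
        unfolding e1 e2 by (rule pw[OF sg norm_ge_zero wpos])
    qed
    then show ?thesis
      using integral_diff[OF integrable_on_mult_right[OF i3] integrable_on_mult_right[OF iJ]]
      unfolding I3_def J_def w_def by simp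
  qed
  define zl where "zl = 2*c/(c^2+1)"
  have zl1: "zl < 1"
  proof -
    have "c^2+1 = 2*c + (c-1)^2" by (simp add: power2_eq_square algebra_simps)
    then have "2*c < c^2+1" using cm by linarith
    then show ?thesis unfolding zl_def using cpos by simp
  qed
  define zs where "zs = (1 + zl)/2"
  have zs1: "zs < 1" "zl < zs" unfolding zs_def using zl1 by auto
  define Rb where "Rb = R0 * exp (4/(1-zs) + 1)"
  have RbR0: "Rb / R0 = exp (4/(1-zs) + 1)" unfolding Rb_def using \<open>R0 > 0\<close> by simp
  have Rbgt: "Rb > R0"
  proof -
    have "4/(1-zs) + 1 > 0" using zs1 by (simp add: add_pos_pos)
    then have "exp (4/(1-zs) + 1) > 1" by simp
    then show ?thesis unfolding Rb_def using \<open>R0 > 0\<close> by simp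
  qed
  define th where "th = (I3 / (R0 * I2) + al) / 2"
  have alI: "al < I3 / (R0 * I2)"
    using ineq' I2pos \<open>R0 > 0\<close> by (simp add: pos_less_divide_eq mult.commute mult.left_commute)
  define r where "r = I3 / (R0 * I2)"
  have thr: "th = r/2 + al/2" unfolding th_def r_def by simp
  have th1a: "al < th" unfolding thr using alI unfolding r_def[symmetric] by linarith
  have th1b: "th < I3 / (R0 * I2)" unfolding thr r_def[symmetric] using alI unfolding r_def[symmetric] by linarith
  note th1 = th1a th1b
  have zs': "2*c/(c^2+1) < zs" using zs1 unfolding zl_def by simp
  have th1': "(c+1)^2/(2*(c^2+1)) < th" using th1 unfolding al_def by simp
  note evs = lim_part[where Cc=C0 and J=J and Rb=Rb, OF I2pos \<open>R0 > 0\<close> \<open>b > 0\<close> \<open>k > 0\<close> \<open>0 < c\<close> \<open>c < 1\<close> zs' th1' th1(2)]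
  show ?thesis
  proof (intro exI[of _ Rb] conjI Rbgt)
    show "\<forall>\<^sub>F sigma in at_top. sigma > 0 \<and>
    (let E = integral (ball 0 R0)
               (\<lambda>x. (rho0 x + p (rho0 x) (n0 x) + Pi0 x) * (norm (sigma *\<^sub>R u1 x))^2
                    + rho0 x - rhobar);
         Q0 = integral (ball 0 R0)
               (\<lambda>x. inner x (sigma *\<^sub>R u1 x) * sqrt (1 + (norm (sigma *\<^sub>R u1 x))^2)
                    * (rho0 x + p (rho0 x) (n0 x) + Pi0 x));
         A = c * (1 + 3 * b * Rb^3 / (E + b * Rb^3));
         B = k * Rb^3 / (E + b * Rb^3);
         z0 = (A * (1 - B) + sqrt (A^2 + 2 * B - B^2)) / (A^2 + 1)
     in A^2 + 2 * B - B^2 > 0 \<and> A + B < 1 \<and> z0 < 1 \<and>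
        integral {1/2 + z0/2 .. 1} (\<lambda>z. 1 / (1 - sqrt (1 - z^2) - A * z - B)) < ln (Rb / R0) \<and>
        Q0 / (R0 * (E + b * R0^3)) > z0 / 2 + 1/2)"
      using evs
    proof (rule eventually_mono)
      fix sigma :: real
      define Es where "Es = sigma^2 * I2 + C0"
      define A where "A = c * (1 + 3 * b * Rb^3 / (Es + b * Rb^3))"
      define B where "B = k * Rb^3 / (Es + b * Rb^3)"
      define z0 where "z0 = (A * (1 - B) + sqrt (A^2 + 2 * B - B^2)) / (A^2 + 1)"
      define Q where "Q = integral (ball 0 R0)
               (\<lambda>x. inner x (sigma *\<^sub>R u1 x) * sqrt (1 + (norm (sigma *\<^sub>R u1 x))^2)
                    * (rho0 x + p (rho0 x) (n0 x) + Pi0 x))"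
      assume H0: "sigma > 0 \<and> sigma^2 * I2 + C0 + b * Rb^3 > 0 \<and> sigma^2 * I2 + C0 + b * R0^3 > 0 \<and>
      (c * (1 + 3 * b * Rb^3 / (sigma^2 * I2 + C0 + b * Rb^3)))^2 + 2 * (k * Rb^3 / (sigma^2 * I2 + C0 + b * Rb^3))
         - (k * Rb^3 / (sigma^2 * I2 + C0 + b * Rb^3))^2 > 0 \<and>
      c * (1 + 3 * b * Rb^3 / (sigma^2 * I2 + C0 + b * Rb^3)) + k * Rb^3 / (sigma^2 * I2 + C0 + b * Rb^3) < 1 \<and>
      (let A = c * (1 + 3 * b * Rb^3 / (sigma^2 * I2 + C0 + b * Rb^3));
           B = k * Rb^3 / (sigma^2 * I2 + C0 + b * Rb^3);
           z0 = (A * (1 - B) + sqrt (A^2 + 2 * B - B^2)) / (A^2 + 1)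
       in z0 < zs \<and> z0 / 2 + 1/2 < th) \<and>
      (sigma^2 * I3 - sigma * J) / (R0 * (sigma^2 * I2 + C0 + b * R0^3)) > th"
      then have H: "sigma > 0" "Es + b * Rb^3 > 0" "Es + b * R0^3 > 0" "A^2 + 2 * B - B^2 > 0"
        "A + B < 1" "z0 < zs" "z0 / 2 + 1/2 < th" "(sigma^2 * I3 - sigma * J) / (R0 * (Es + b * R0^3)) > th"
        unfolding Let_def Es_def[symmetric] A_def[symmetric] B_def[symmetric] z0_def[symmetric] by blast+
      have QL: "Q \<ge> sigma^2 * I3 - sigma * J" unfolding Q_def using H(1) Qge by simp
      have A0: "A \<ge> 0" unfolding A_def using H(2) \<open>b > 0\<close> \<open>0 < c\<close> \<open>R0 > 0\<close> Rbgt
        by (intro mult_nonneg_nonneg add_nonneg_nonneg divide_nonneg_pos) auto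
      have B0: "B \<ge> 0" unfolding B_def using H(2) \<open>k > 0\<close> \<open>R0 > 0\<close> Rbgt
        by (intro divide_nonneg_pos) auto
      have Z1: "z0 < 1" using H(6) zs1 by linarith
      have intb: "integral {1/2 + z0/2 .. 1} (\<lambda>z. 1 / (1 - sqrt (1 - z^2) - A * z - B)) \<le> 4 / (1 - z0)"
        by (rule int_bound[OF A0 B0 H(5) H(4) z0_def Z1])
      have "4 / (1 - z0) \<le> 4 / (1 - zs)" using H(6) zs1 by (intro divide_left_mono) auto
      then have intb2: "integral {1/2 + z0/2 .. 1} (\<lambda>z. 1 / (1 - sqrt (1 - z^2) - A * z - B)) < ln (Rb / R0)"
        using intb unfolding RbR0 by simp
      have "(sigma^2 * I3 - sigma * J) / (R0 * (Es + b * R0^3)) \<le> Q / (R0 * (Es + b * R0^3))"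
        using H(3) QL \<open>R0 > 0\<close> by (intro divide_right_mono) auto
      then have rat: "Q / (R0 * (Es + b * R0^3)) > z0 / 2 + 1/2" using H(7,8) by linarith
      show "sigma > 0 \<and>
    (let E = integral (ball 0 R0)
               (\<lambda>x. (rho0 x + p (rho0 x) (n0 x) + Pi0 x) * (norm (sigma *\<^sub>R u1 x))^2
                    + rho0 x - rhobar);
         Q0 = integral (ball 0 R0)
               (\<lambda>x. inner x (sigma *\<^sub>R u1 x) * sqrt (1 + (norm (sigma *\<^sub>R u1 x))^2)
                    * (rho0 x + p (rho0 x) (n0 x) + Pi0 x));
         A = c * (1 + 3 * b * Rb^3 / (E + b * Rb^3));
         B = k * Rb^3 / (E + b * Rb^3);
         z0 = (A * (1 - B) + sqrt (A^2 + 2 * B - B^2)) / (A^2 + 1)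
     in A^2 + 2 * B - B^2 > 0 \<and> A + B < 1 \<and> z0 < 1 \<and>
        integral {1/2 + z0/2 .. 1} (\<lambda>z. 1 / (1 - sqrt (1 - z^2) - A * z - B)) < ln (Rb / R0) \<and>
        Q0 / (R0 * (E + b * R0^3)) > z0 / 2 + 1/2)"
        unfolding Let_def Eeq Q_def[symmetric] Es_def[symmetric] A_def[symmetric] B_def[symmetric] z0_def[symmetric]
        using H(1,4,5) Z1 intb2 rat by blast
    qed
  qed
qed

end
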